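(* Let $\lambda_1,\dots,\lambda_5,p,q$ be arbitrary integers, let $A(x_1,x_2,x_3)$ be the $3\times3$ matrix $[x_{ij}]$ with $x_{11}=x_1,\ x_{12}=x_2,\ x_{13}=x_3$, $x_{21}=-\lambda_3(\lambda_1-\lambda_2-\lambda_3+\lambda_5)x_2-\lambda_3(\lambda_2-\lambda_4)x_3$, $x_{22}=x_1+\lambda_1x_2+\lambda_2x_3$, $x_{23}=\lambda_3x_2+\lambda_3x_3$, $x_{31}=-\lambda_3(\lambda_2-\lambda_4)x_2+(-\lambda_1\lambda_4+\lambda_2^2-\lambda_2\lambda_5+\lambda_3\lambda_4)x_3$, $x_{32}=\lambda_2x_2+\lambda_4x_3$, $x_{33}=x_1+\lambda_3x_2+\lambda_5x_3$, and let $$P(x_1,\dots,x_6)=\begin{bmatrix}A(x_1,x_2,x_3) & A(x_4,x_5,x_6)\\ -qA(x_4,x_5,x_6) & A(x_1,x_2,x_3)+pA(x_4,x_5,x_6)\end{bmatrix}.$$ Then there exist bilinear forms $z_1,\dots,z_6$ in independent variables $x_1,\dots,x_6,y_1,\dots,y_6$, with coefficients integer polynomials in $\lambda_1,\dots,\lambda_5,p,q$, such that $P(x_1,\dots,x_6)P(y_1,\dots,y_6)=P(z_1,\dots,z_6)$; consequently the senary sextic form $f=\det P$ satisfies $f(x_1,\dots,x_6)f(y_1,\dots,y_6)=f(z_1,\dots,z_6)$. *)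

theory Defs
  imports "Jordan_Normal_Form.Determinant"
begin

text \<open>Integer polynomial expressions in the parameter variables
  (variable 0..4 = lambda1..lambda5, 5 = p, 6 = q).\<close>
datatype ipoly = PVar nat | PConst int | PAdd ipoly ipoly | PMul ipoly ipoly | PNeg ipoly

fun ipeval :: "(nat \<Rightarrow> int) \<Rightarrow> ipoly \<Rightarrow> int" where
  "ipeval v (PVar i) = v i"
| "ipeval v (PConst c) = c"
| "ipeval v (PAdd a b) = ipeval v a + ipeval v b"
| "ipeval v (PMul a b) = ipeval v a * ipeval v b"
| "ipeval v (PNeg a) = - ipeval v a"

definition params :: "int \<Rightarrow> int \<Rightarrow> int \<Rightarrow> int \<Rightarrow> int \<Rightarrow> int \<Rightarrow> int \<Rightarrow> nat \<Rightarrow> int" where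
  "params l1 l2 l3 l4 l5 p q = (\<lambda>i. if i < 7 then [l1, l2, l3, l4, l5, p, q] ! i else 0)"

definition Amat :: "int \<Rightarrow> int \<Rightarrow> int \<Rightarrow> int \<Rightarrow> int \<Rightarrow> int \<Rightarrow> int \<Rightarrow> int \<Rightarrow> int mat" where
  "Amat l1 l2 l3 l4 l5 x1 x2 x3 = mat_of_rows_list 3
     [[x1, x2, x3],
      [- l3 * (l1 - l2 - l3 + l5) * x2 - l3 * (l2 - l4) * x3,
       x1 + l1 * x2 + l2 * x3,
       l3 * x2 + l3 * x3],
      [- l3 * (l2 - l4) * x2 + (- l1 * l4 + l2^2 - l2 * l5 + l3 * l4) * x3,
       l2 * x2 + l4 * x3,
       x1 + l3 * x2 + l5 * x3]]"

text \<open>The 6x6 block matrix P(x_1,...,x_6); x i stands for x_(i+1), i < 6.\<close>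
definition Pmat :: "int \<Rightarrow> int \<Rightarrow> int \<Rightarrow> int \<Rightarrow> int \<Rightarrow> int \<Rightarrow> int \<Rightarrow> (nat \<Rightarrow> int) \<Rightarrow> int mat" where
  "Pmat l1 l2 l3 l4 l5 p q x =
     (let A = Amat l1 l2 l3 l4 l5 (x 0) (x 1) (x 2);
          B = Amat l1 l2 l3 l4 l5 (x 3) (x 4) (x 5)
      in four_block_mat A B ((- q) \<cdot>\<^sub>m B) (A + p \<cdot>\<^sub>m B))"

end

theory Submission imports Defs begin

definition zA1 :: "int\<Rightarrow>int\<Rightarrow>int\<Rightarrow>int\<Rightarrow>int\<Rightarrow>int\<Rightarrow>int\<Rightarrow>int\<Rightarrow>int\<Rightarrow>int\<Rightarrow>int\<Rightarrow>int" where
 "zA1 l1 l2 l3 l4 l5 a1 a2 a3 b1 b2 b3 = a1*b1 - l3*(l1-l2-l3+l5)*a2*b2 - l3*(l2-l4)*a2*b3 - l3*(l2-l4)*a3*b2 + (-l1*l4+l2^2-l2*l5+l3*l4)*a3*b3"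
definition zA2 :: "int\<Rightarrow>int\<Rightarrow>int\<Rightarrow>int\<Rightarrow>int\<Rightarrow>int\<Rightarrow>int\<Rightarrow>int\<Rightarrow>int\<Rightarrow>int\<Rightarrow>int\<Rightarrow>int" where
 "zA2 l1 l2 l3 l4 l5 a1 a2 a3 b1 b2 b3 = a1*b2 + a2*b1 + l1*a2*b2 + l2*a2*b3 + l2*a3*b2 + l4*a3*b3"
definition zA3 :: "int\<Rightarrow>int\<Rightarrow>int\<Rightarrow>int\<Rightarrow>int\<Rightarrow>int\<Rightarrow>int\<Rightarrow>int\<Rightarrow>int\<Rightarrow>int\<Rightarrow>int\<Rightarrow>int" where
 "zA3 l1 l2 l3 l4 l5 a1 a2 a3 b1 b2 b3 = a1*b3 + a3*b1 + l3*a2*b2 + l3*a2*b3 + l3*a3*b2 + l5*a3*b3"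

lemma Amat_carrier[simp]: "Amat l1 l2 l3 l4 l5 a1 a2 a3 \<in> carrier_mat 3 3"
  by (rule carrier_matI) (simp_all add: Amat_def mat_of_rows_list_def)

lemma all3: "(\<forall>i<(3::nat). P i) \<longleftrightarrow> P 0 \<and> P 1 \<and> P 2"
  by (auto simp add: numeral_eq_Suc less_Suc_eq)

lemma Amat_dim[simp]: "dim_row (Amat l1 l2 l3 l4 l5 a1 a2 a3) = 3" "dim_col (Amat l1 l2 l3 l4 l5 a1 a2 a3) = 3"
  by (simp_all add: Amat_def mat_of_rows_list_def)

lemma eq3: fixes A B :: "int mat" assumes "A \<in> carrier_mat 3 3" "B \<in> carrier_mat 3 3"
  "\<forall>i<3. \<forall>j<3. A$$(i,j) = B$$(i,j)" shows "A = B"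
  using assms by (intro eq_matI) auto

lemma sum3: "(\<Sum>i<(3::nat). f i) = f 0 + f 1 + f (2::nat)"
  by (simp add: numeral_3_eq_3 numeral_2_eq_2)

lemma sum3': "(\<Sum>i\<in>{0..<(3::nat)}. f i) = f 0 + f 1 + f (2::nat)"
  by (simp add: numeral_3_eq_3 numeral_2_eq_2)

lemma Amat_idx: "i < 3 \<Longrightarrow> j < 3 \<Longrightarrow> Amat l1 l2 l3 l4 l5 a1 a2 a3 $$ (i,j) =
   [[a1, a2, a3],
      [- l3 * (l1 - l2 - l3 + l5) * a2 - l3 * (l2 - l4) * a3,
       a1 + l1 * a2 + l2 * a3,
       l3 * a2 + l3 * a3],
      [- l3 * (l2 - l4) * a2 + (- l1 * l4 + l2^2 - l2 * l5 + l3 * l4) * a3,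
       l2 * a2 + l4 * a3,
       a1 + l3 * a2 + l5 * a3]] ! i ! j"
  by (simp add: Amat_def mat_of_rows_list_def)

lemma Amat_add: "Amat l1 l2 l3 l4 l5 a1 a2 a3 + Amat l1 l2 l3 l4 l5 b1 b2 b3 =
  Amat l1 l2 l3 l4 l5 (a1+b1) (a2+b2) (a3+b3)"
  apply (rule eq3)
    apply simp_all
  apply (simp only: all3)
  apply (simp add: Amat_idx del: One_nat_def)
  apply (simp add: algebra_simps)
  done

lemma Amat_smult: "k \<cdot>\<^sub>m Amat l1 l2 l3 l4 l5 a1 a2 a3 =
  Amat l1 l2 l3 l4 l5 (k*a1) (k*a2) (k*a3)"
  apply (rule eq3)
    apply simp_all
  apply (simp only: all3)
  apply (simp add: Amat_idx del: One_nat_def)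
  apply (simp add: algebra_simps)
  done
lemma Amat_ix[simp]:
  "Amat l1 l2 l3 l4 l5 a1 a2 a3 $$ (0,0) = a1"
  "Amat l1 l2 l3 l4 l5 a1 a2 a3 $$ (0,1) = a2"
  "Amat l1 l2 l3 l4 l5 a1 a2 a3 $$ (0,2) = a3"
  "Amat l1 l2 l3 l4 l5 a1 a2 a3 $$ (1,0) = - l3 * (l1 - l2 - l3 + l5) * a2 - l3 * (l2 - l4) * a3"
  "Amat l1 l2 l3 l4 l5 a1 a2 a3 $$ (1,1) = a1 + l1 * a2 + l2 * a3"
  "Amat l1 l2 l3 l4 l5 a1 a2 a3 $$ (1,2) = l3 * a2 + l3 * a3"
  "Amat l1 l2 l3 l4 l5 a1 a2 a3 $$ (2,0) = - l3 * (l2 - l4) * a2 + (- l1 * l4 + l2^2 - l2 * l5 + l3 * l4) * a3"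
  "Amat l1 l2 l3 l4 l5 a1 a2 a3 $$ (2,1) = l2 * a2 + l4 * a3"
  "Amat l1 l2 l3 l4 l5 a1 a2 a3 $$ (2,2) = a1 + l3 * a2 + l5 * a3"
  by (simp_all add: Amat_def mat_of_rows_list_def)

lemma Amat_ix2[simp]:
  "Amat l1 l2 l3 l4 l5 a1 a2 a3 $$ (0,Suc 0) = a2"
  "Amat l1 l2 l3 l4 l5 a1 a2 a3 $$ (Suc 0,0) = - l3 * (l1 - l2 - l3 + l5) * a2 - l3 * (l2 - l4) * a3"
  "Amat l1 l2 l3 l4 l5 a1 a2 a3 $$ (Suc 0,Suc 0) = a1 + l1 * a2 + l2 * a3"
  "Amat l1 l2 l3 l4 l5 a1 a2 a3 $$ (Suc 0,2) = l3 * a2 + l3 * a3"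
  "Amat l1 l2 l3 l4 l5 a1 a2 a3 $$ (2,Suc 0) = l2 * a2 + l4 * a3"
  by (simp_all add: Amat_def mat_of_rows_list_def)

lemma Amat_mult_ix: "i < 3 \<Longrightarrow> j < 3 \<Longrightarrow> (Amat l1 l2 l3 l4 l5 a1 a2 a3 * Amat l1 l2 l3 l4 l5 b1 b2 b3) $$ (i,j)
  = Amat l1 l2 l3 l4 l5 a1 a2 a3 $$ (i,0) * Amat l1 l2 l3 l4 l5 b1 b2 b3 $$ (0,j)
  + Amat l1 l2 l3 l4 l5 a1 a2 a3 $$ (i,1) * Amat l1 l2 l3 l4 l5 b1 b2 b3 $$ (1,j)
  + Amat l1 l2 l3 l4 l5 a1 a2 a3 $$ (i,2) * Amat l1 l2 l3 l4 l5 b1 b2 b3 $$ (2,j)"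
  by (simp add: index_mult_mat scalar_prod_def sum3')

lemma Amat_mult: "Amat l1 l2 l3 l4 l5 a1 a2 a3 * Amat l1 l2 l3 l4 l5 b1 b2 b3 =
  Amat l1 l2 l3 l4 l5 (zA1 l1 l2 l3 l4 l5 a1 a2 a3 b1 b2 b3) (zA2 l1 l2 l3 l4 l5 a1 a2 a3 b1 b2 b3) (zA3 l1 l2 l3 l4 l5 a1 a2 a3 b1 b2 b3)"
  apply (rule eq3)
    apply (rule mult_carrier_mat[of _ 3 3 _ 3]; simp)
   apply simp
  apply (simp only: all3)
  apply (simp add: Amat_mult_ix del: index_mult_mat)
  apply (simp add: zA1_def zA2_def zA3_def algebra_simps power2_eq_square)
  done
definition T :: "nat \<Rightarrow> nat \<Rightarrow> nat \<Rightarrow> ipoly" where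
 "T k i j = [
   [[PConst 1, PConst 0, PConst 0],
    [PConst 0, PNeg (PMul (PVar 2) (PAdd (PAdd (PVar 0) (PNeg (PVar 1))) (PAdd (PNeg (PVar 2)) (PVar 4)))),
               PNeg (PMul (PVar 2) (PAdd (PVar 1) (PNeg (PVar 3))))],
    [PConst 0, PNeg (PMul (PVar 2) (PAdd (PVar 1) (PNeg (PVar 3)))),
       PAdd (PAdd (PNeg (PMul (PVar 0) (PVar 3))) (PMul (PVar 1) (PVar 1)))
            (PAdd (PNeg (PMul (PVar 1) (PVar 4))) (PMul (PVar 2) (PVar 3)))]],
   [[PConst 0, PConst 1, PConst 0],
    [PConst 1, PVar 0, PVar 1],
    [PConst 0, PVar 1, PVar 3]],
   [[PConst 0, PConst 0, PConst 1],
    [PConst 0, PVar 2, PVar 2],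
    [PConst 1, PVar 2, PVar 4]]] ! k ! i ! j"

definition cc :: "nat \<Rightarrow> nat \<Rightarrow> nat \<Rightarrow> ipoly" where
 "cc k i j = (if k < 3 then
     (if i < 3 \<and> j < 3 then T k i j
      else if 3 \<le> i \<and> 3 \<le> j then PNeg (PMul (PVar 6) (T k (i-3) (j-3))) else PConst 0)
   else (if i < 3 \<and> 3 \<le> j then T (k-3) i (j-3)
      else if 3 \<le> i \<and> j < 3 then T (k-3) (i-3) j
      else if 3 \<le> i \<and> 3 \<le> j then PMul (PVar 5) (T (k-3) (i-3) (j-3)) else PConst 0))"

lemma sum6: "(\<Sum>i<(6::nat). f i) = f 0 + f 1 + f 2 + f 3 + f 4 + f (5::nat)"
  by (simp add: eval_nat_numeral)

lemma zval:
  fixes x y :: "nat \<Rightarrow> int" and l1 l2 l3 l4 l5 p q :: int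
  defines "z \<equiv> (\<lambda>k. \<Sum>i<6. \<Sum>j<6. ipeval (params l1 l2 l3 l4 l5 p q) (cc k i j) * x i * y j)"
  shows "z 0 = zA1 l1 l2 l3 l4 l5 (x 0) (x 1) (x 2) (y 0) (y 1) (y 2) - q * zA1 l1 l2 l3 l4 l5 (x 3) (x 4) (x 5) (y 3) (y 4) (y 5)"
    "z 1 = zA2 l1 l2 l3 l4 l5 (x 0) (x 1) (x 2) (y 0) (y 1) (y 2) - q * zA2 l1 l2 l3 l4 l5 (x 3) (x 4) (x 5) (y 3) (y 4) (y 5)"
    "z 2 = zA3 l1 l2 l3 l4 l5 (x 0) (x 1) (x 2) (y 0) (y 1) (y 2) - q * zA3 l1 l2 l3 l4 l5 (x 3) (x 4) (x 5) (y 3) (y 4) (y 5)"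
    "z 3 = zA1 l1 l2 l3 l4 l5 (x 0) (x 1) (x 2) (y 3) (y 4) (y 5) + zA1 l1 l2 l3 l4 l5 (x 3) (x 4) (x 5) (y 0) (y 1) (y 2) + p * zA1 l1 l2 l3 l4 l5 (x 3) (x 4) (x 5) (y 3) (y 4) (y 5)"
    "z 4 = zA2 l1 l2 l3 l4 l5 (x 0) (x 1) (x 2) (y 3) (y 4) (y 5) + zA2 l1 l2 l3 l4 l5 (x 3) (x 4) (x 5) (y 0) (y 1) (y 2) + p * zA2 l1 l2 l3 l4 l5 (x 3) (x 4) (x 5) (y 3) (y 4) (y 5)"
    "z 5 = zA3 l1 l2 l3 l4 l5 (x 0) (x 1) (x 2) (y 3) (y 4) (y 5) + zA3 l1 l2 l3 l4 l5 (x 3) (x 4) (x 5) (y 0) (y 1) (y 2) + p * zA3 l1 l2 l3 l4 l5 (x 3) (x 4) (x 5) (y 3) (y 4) (y 5)"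
  unfolding z_def
  by (simp_all add: sum6 cc_def T_def params_def zA1_def zA2_def zA3_def algebra_simps power2_eq_square)

lemma zA_bil:
  "zA1 l1 l2 l3 l4 l5 a1 a2 a3 (k*b1) (k*b2) (k*b3) = k * zA1 l1 l2 l3 l4 l5 a1 a2 a3 b1 b2 b3"
  "zA2 l1 l2 l3 l4 l5 a1 a2 a3 (k*b1) (k*b2) (k*b3) = k * zA2 l1 l2 l3 l4 l5 a1 a2 a3 b1 b2 b3"
  "zA3 l1 l2 l3 l4 l5 a1 a2 a3 (k*b1) (k*b2) (k*b3) = k * zA3 l1 l2 l3 l4 l5 a1 a2 a3 b1 b2 b3"
  "zA1 l1 l2 l3 l4 l5 (k*a1) (k*a2) (k*a3) b1 b2 b3 = k * zA1 l1 l2 l3 l4 l5 a1 a2 a3 b1 b2 b3"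
  "zA2 l1 l2 l3 l4 l5 (k*a1) (k*a2) (k*a3) b1 b2 b3 = k * zA2 l1 l2 l3 l4 l5 a1 a2 a3 b1 b2 b3"
  "zA3 l1 l2 l3 l4 l5 (k*a1) (k*a2) (k*a3) b1 b2 b3 = k * zA3 l1 l2 l3 l4 l5 a1 a2 a3 b1 b2 b3"
  "zA1 l1 l2 l3 l4 l5 a1 a2 a3 (b1+c1) (b2+c2) (b3+c3) = zA1 l1 l2 l3 l4 l5 a1 a2 a3 b1 b2 b3 + zA1 l1 l2 l3 l4 l5 a1 a2 a3 c1 c2 c3"
  "zA2 l1 l2 l3 l4 l5 a1 a2 a3 (b1+c1) (b2+c2) (b3+c3) = zA2 l1 l2 l3 l4 l5 a1 a2 a3 b1 b2 b3 + zA2 l1 l2 l3 l4 l5 a1 a2 a3 c1 c2 c3"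
  "zA3 l1 l2 l3 l4 l5 a1 a2 a3 (b1+c1) (b2+c2) (b3+c3) = zA3 l1 l2 l3 l4 l5 a1 a2 a3 b1 b2 b3 + zA3 l1 l2 l3 l4 l5 a1 a2 a3 c1 c2 c3"
  "zA1 l1 l2 l3 l4 l5 (b1+c1) (b2+c2) (b3+c3) a1 a2 a3 = zA1 l1 l2 l3 l4 l5 b1 b2 b3 a1 a2 a3 + zA1 l1 l2 l3 l4 l5 c1 c2 c3 a1 a2 a3"
  "zA2 l1 l2 l3 l4 l5 (b1+c1) (b2+c2) (b3+c3) a1 a2 a3 = zA2 l1 l2 l3 l4 l5 b1 b2 b3 a1 a2 a3 + zA2 l1 l2 l3 l4 l5 c1 c2 c3 a1 a2 a3"
  "zA3 l1 l2 l3 l4 l5 (b1+c1) (b2+c2) (b3+c3) a1 a2 a3 = zA3 l1 l2 l3 l4 l5 b1 b2 b3 a1 a2 a3 + zA3 l1 l2 l3 l4 l5 c1 c2 c3 a1 a2 a3"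
  by (simp_all add: zA1_def zA2_def zA3_def algebra_simps)

lemma Pmat_carrier: "Pmat l1 l2 l3 l4 l5 p q x \<in> carrier_mat 6 6"
proof -
  have "Pmat l1 l2 l3 l4 l5 p q x \<in> carrier_mat (3+3) (3+3)"
    unfolding Pmat_def Let_def by (rule four_block_carrier_mat) simp_all
  then show ?thesis by simp
qed

theorem mainTheorem8:
  shows "\<exists>c :: nat \<Rightarrow> nat \<Rightarrow> nat \<Rightarrow> ipoly.
    \<forall>l1 l2 l3 l4 l5 p q :: int. \<forall>x y :: nat \<Rightarrow> int.
      Pmat l1 l2 l3 l4 l5 p q x * Pmat l1 l2 l3 l4 l5 p q y
        = Pmat l1 l2 l3 l4 l5 p q
            (\<lambda>k. \<Sum>i<6. \<Sum>j<6. ipeval (params l1 l2 l3 l4 l5 p q) (c k i j) * x i * y j)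
      \<and> det (Pmat l1 l2 l3 l4 l5 p q x) * det (Pmat l1 l2 l3 l4 l5 p q y)
        = det (Pmat l1 l2 l3 l4 l5 p q
            (\<lambda>k. \<Sum>i<6. \<Sum>j<6. ipeval (params l1 l2 l3 l4 l5 p q) (c k i j) * x i * y j))"
proof (intro exI allI)
  fix l1 l2 l3 l4 l5 p q :: int and x y :: "nat \<Rightarrow> int"
  define z where "z \<equiv> (\<lambda>k. \<Sum>i<6. \<Sum>j<6. ipeval (params l1 l2 l3 l4 l5 p q) (cc k i j) * x i * y j)"
  note zv = zval
  have M: "Pmat l1 l2 l3 l4 l5 p q x * Pmat l1 l2 l3 l4 l5 p q y = Pmat l1 l2 l3 l4 l5 p q z"
    unfolding Pmat_def Let_def
    apply (subst mult_four_block_mat[OF Amat_carrier Amat_carrier smult_carrier_mat[OF Amat_carrier]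
       add_carrier_mat[OF smult_carrier_mat[OF Amat_carrier]]
       Amat_carrier Amat_carrier smult_carrier_mat[OF Amat_carrier]
       add_carrier_mat[OF smult_carrier_mat[OF Amat_carrier]]])
    apply (simp only: Amat_smult Amat_mult Amat_add z_def zv zA_bil)
    apply (simp add: algebra_simps)
    done
  show "Pmat l1 l2 l3 l4 l5 p q x * Pmat l1 l2 l3 l4 l5 p q y = Pmat l1 l2 l3 l4 l5 p q z \<and>
    det (Pmat l1 l2 l3 l4 l5 p q x) * det (Pmat l1 l2 l3 l4 l5 p q y) = det (Pmat l1 l2 l3 l4 l5 p q z)"
    using M det_mult[OF Pmat_carrier Pmat_carrier] by metis
qed
end
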